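(* The subspaces $\mathcal{C}_0^{sym}$ and $\mathcal{C}_0^{cw}$ of $\mathcal{C}$ are orthogonal with respect to the mixed area: $A(\gamma_1,\gamma_2)=0$ for all $\gamma_1\in\mathcal{C}_0^{sym}$ and $\gamma_2\in\mathcal{C}_0^{cw}$. Moreover both subspaces are orthogonal to $\mathcal{U}=\{\lambda u:\lambda\in\mathbb{R}\}$.
   Context: Standing setting. $[a,b]$ is the $2\times2$ determinant with columns $a,b$. The unit ball $U$ of a normed plane is compact convex, origin-symmetric, with nonempty interior, and boundary $u=\partial U$ a union of $2n$ arcs $u_{i+n}=-u_i$, each a smooth strictly convex arc or a segment; $u$ is parameterized as a closed curve $u:[0,2T]\to\mathbb{R}^2$ with $u(t+T)=-u(t)$, smooth with $u'\ne0$ on each interval $[t_i,t_{i+1}]$ between vertices ($[u',u'']\neq 0$ on strictly convex arcs); on each such interval $v(t)=u'(t)/[u(t),u'(t)]$. Admissible class $\mathcal{C}$: closed continuous curves $\gamma:[0,2T]\to\mathbb{R}^2$ (extended $2T$-periodically), smooth on each $[t_i,t_{i+1}]$ with $\gamma'(t)=r(t)u'(t)$ for a scalar function $r$. Dual length $L_*(\gamma)=\int_0^{2T} r(t)[u,u'](t)\,dt$; mixed area $A(\gamma_1,\gamma_2)=\frac12\int_0^{2T}[\gamma_1,\gamma_2'](t)\,dt$. $\mathcal{C}_0^{sym}$ is the set of $\gamma\in\mathcal{C}$ with $\gamma(t+T)=-\gamma(t)$ for all $t$ and $L_*(\gamma)=0$. $\mathcal{C}_0^{cw}$ is the set of $\gamma\in\mathcal{C}$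 with $L_*(\gamma)=0$ that are of constant width, i.e. $[\gamma(t+T),v(t+T)]+[\gamma(t),v(t)]=c$ for a constant $c$ (necessarily $c=0$ here). *)

theory Defs
  imports "HOL-Analysis.Analysis"
begin

text \<open>Planar vectors are represented as pairs of reals.
  det2 a b is the 2x2 determinant [a,b] with columns a, b.\<close>
definition det2 :: "real \<times> real \<Rightarrow> real \<times> real \<Rightarrow> real" where
  "det2 a b = fst a * snd b - snd a * fst b"

fun dtr :: "nat \<Rightarrow> (real \<Rightarrow> 'a::real_normed_vector) \<Rightarrow> real \<Rightarrow> 'a" where
  "dtr 0 f = f"
| "dtr (Suc k) f = (\<lambda>s. vector_derivative (dtr k f) (at s))"

text \<open>Smooth (C-infinity) on the whole real line: all iterated derivatives exist everywhere.
  A function smooth on a closed interval is represented as the restriction of such a function.\<close>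
definition smooth_fun :: "(real \<Rightarrow> 'a::real_normed_vector) \<Rightarrow> bool" where
  "smooth_fun f \<longleftrightarrow> (\<forall>k s. dtr k f differentiable (at s))"

definition unit_ball_setting ::
  "real \<Rightarrow> nat \<Rightarrow> (nat \<Rightarrow> real) \<Rightarrow> (real \<Rightarrow> real \<times> real) \<Rightarrow> (real \<times> real) set \<Rightarrow> bool" where
  "unit_ball_setting T n tv u U \<longleftrightarrow>
     T > 0 \<and> n \<ge> 1 \<and>
     compact U \<and> convex U \<and> (\<forall>x\<in>U. - x \<in> U) \<and> interior U \<noteq> {} \<and>
     tv 0 = 0 \<and> tv (2*n) = 2*T \<and> (\<forall>i<2*n. tv i < tv (Suc i)) \<and>
     (\<forall>i\<le>n. tv (i+n) = tv i + T) \<and>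
     continuous_on UNIV u \<and> (\<forall>s. u (s + 2*T) = u s) \<and> (\<forall>s. u (s + T) = - u s) \<and>
     inj_on u {0..<2*T} \<and> frontier U = u ` {0..2*T} \<and>
     (\<forall>i<2*n. \<exists>f. smooth_fun f \<and>
        (\<forall>s\<in>{tv i..tv (Suc i)}. f s = u s \<and> dtr 1 f s \<noteq> 0) \<and>
        ((\<forall>s\<in>{tv i..tv (Suc i)}. det2 (dtr 1 f s) (dtr 2 f s) \<noteq> 0) \<or>
         (\<exists>a b. u ` {tv i..tv (Suc i)} = closed_segment a b)))"

text \<open>u'(s), taken as the (two-sided) derivative; used only at non-vertex points or inside integrals.\<close>
definition du :: "(real \<Rightarrow> real \<times> real) \<Rightarrow> real \<Rightarrow> real \<times> real" where
  "du u s = vector_derivative u (at s)"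

definition vfield :: "(real \<Rightarrow> real \<times> real) \<Rightarrow> real \<Rightarrow> real \<times> real" where
  "vfield u s = scaleR (1 / det2 (u s) (du u s)) (du u s)"

text \<open>Admissible class C (curves extended 2T-periodically to the real line), with the scalar
  function r such that gamma' = r u' on each open piece.\<close>
definition admissible ::
  "real \<Rightarrow> nat \<Rightarrow> (nat \<Rightarrow> real) \<Rightarrow> (real \<Rightarrow> real \<times> real) \<Rightarrow> (real \<Rightarrow> real \<times> real) \<Rightarrow> (real \<Rightarrow> real) \<Rightarrow> bool" where
  "admissible T n tv u \<gamma> r \<longleftrightarrow>
     continuous_on UNIV \<gamma> \<and> (\<forall>s. \<gamma> (s + 2*T) = \<gamma> s) \<and>
     (\<forall>i<2*n. \<exists>g. smooth_fun g \<and> (\<forall>s\<in>{tv i..tv (Suc i)}. g s = \<gamma> s)) \<and>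
     (\<forall>i<2*n. \<forall>s\<in>{tv i<..<tv (Suc i)}. du \<gamma> s = scaleR (r s) (du u s))"

definition dual_length :: "real \<Rightarrow> (real \<Rightarrow> real \<times> real) \<Rightarrow> (real \<Rightarrow> real) \<Rightarrow> real" where
  "dual_length T u r = integral {0..2*T} (\<lambda>s. r s * det2 (u s) (du u s))"

definition mixed_area :: "real \<Rightarrow> (real \<Rightarrow> real \<times> real) \<Rightarrow> (real \<Rightarrow> real \<times> real) \<Rightarrow> real" where
  "mixed_area T \<gamma>1 \<gamma>2 = 1/2 * integral {0..2*T} (\<lambda>s. det2 (\<gamma>1 s) (du \<gamma>2 s))"

definition C0sym ::
  "real \<Rightarrow> nat \<Rightarrow> (nat \<Rightarrow> real) \<Rightarrow> (real \<Rightarrow> real \<times> real) \<Rightarrow> (real \<Rightarrow> real \<times> real) set" where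
  "C0sym T n tv u = {\<gamma>. \<exists>r. admissible T n tv u \<gamma> r \<and> (\<forall>s. \<gamma> (s + T) = - \<gamma> s) \<and>
                         dual_length T u r = 0}"

text \<open>Constant width: [gamma(t+T), v(t+T)] + [gamma(t), v(t)] = c for all non-vertex t
  (at vertices v is only defined one-sidedly).\<close>
definition C0cw ::
  "real \<Rightarrow> nat \<Rightarrow> (nat \<Rightarrow> real) \<Rightarrow> (real \<Rightarrow> real \<times> real) \<Rightarrow> (real \<Rightarrow> real \<times> real) set" where
  "C0cw T n tv u = {\<gamma>. \<exists>r. admissible T n tv u \<gamma> r \<and> dual_length T u r = 0 \<and>
       (\<exists>c. \<forall>i<2*n. \<forall>s\<in>{tv i<..<tv (Suc i)}.
            det2 (\<gamma> (s + T)) (vfield u (s + T)) + det2 (\<gamma> s) (vfield u s) = c)}"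

end

theory Submission
  imports Defs
begin


lemma tv_less:
  assumes "\<forall>i<N. tv i < tv (Suc i)" "i < j" "j \<le> N"
  shows "(tv i::real) < tv j"
  using assms(2,3)
proof (induction j)
  case 0 then show ?case by simp
next
  case (Suc j)
  show ?case
  proof (cases "i = j")
    case True then show ?thesis using assms(1) Suc by auto
  next
    case False then have "tv i < tv j" using Suc by auto
    moreover have "tv j < tv (Suc j)" using assms(1) Suc(3) by simp
    ultimately show ?thesis by linarith
  qed
qed

lemma tv_le:
  assumes "\<forall>i<N. tv i < tv (Suc i)" "i \<le> j" "j \<le> N"
  shows "(tv i::real) \<le> tv j"
  using tv_less[OF assms(1)] assms(2,3) by (cases "i = j") (auto intro: less_imp_le)

lemma piece_of:
  assumes "\<forall>i<N. tv i < tv (Suc i)" "(s::real) \<in> {tv 0..tv N}" "s \<notin> tv ` {..N}"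
  shows "\<exists>i<N. tv i < s \<and> s < tv (Suc i)"
proof -
  define J where "J = {j. j \<le> N \<and> tv j < s}"
  have fin: "finite J" unfolding J_def by auto
  have "tv 0 \<noteq> s" using assms(3) by force
  then have "0 \<in> J" using assms(2) unfolding J_def by auto
  then have ne: "J \<noteq> {}" by auto
  define i where "i = Max J"
  have iJ: "i \<in> J" using Max_in[OF fin ne] i_def by simp
  have iN: "i < N"
  proof -
    have "i \<le> N" using iJ J_def by auto
    moreover have "i \<noteq> N" using iJ assms(2) unfolding J_def by auto
    ultimately show ?thesis by simp
  qed
  have "\<not> tv (Suc i) < s"
  proof
    assume "tv (Suc i) < s"
    then have "Suc i \<in> J" using iN J_def by auto
    then have "Suc i \<le> i" using Max_ge[OF fin] i_def by auto
    then show False by simp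
  qed
  moreover have "tv (Suc i) \<noteq> s" using assms(3) iN by (metis Suc_leI atMost_iff image_eqI)
  ultimately show ?thesis using iJ iN J_def by (intro exI[of _ i]) auto
qed



definition pw :: "nat \<Rightarrow> (nat \<Rightarrow> real) \<Rightarrow> (real \<Rightarrow> real \<times> real) \<Rightarrow> bool" where
  "pw N tv \<gamma> \<longleftrightarrow> continuous_on UNIV \<gamma> \<and>
     (\<forall>i<N. \<exists>g. smooth_fun g \<and> (\<forall>s\<in>{tv i..tv (Suc i)}. g s = \<gamma> s))"

lemma smooth_deriv:
  assumes "smooth_fun (g::real \<Rightarrow> real \<times> real)"
  shows "(g has_vector_derivative dtr 1 g s) (at s)" "continuous_on UNIV (dtr 1 g)"
proof -
  have "dtr 0 g differentiable (at s)" using assms unfolding smooth_fun_def by blast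
  then show "(g has_vector_derivative dtr 1 g s) (at s)"
    by (simp add: vector_derivative_works[symmetric])
  have "\<And>x. dtr 1 g differentiable (at x)" using assms unfolding smooth_fun_def by blast
  then show "continuous_on UNIV (dtr 1 g)"
    by (meson continuous_at_imp_continuous_on differentiable_imp_continuous_within)
qed

lemma pw_deriv:
  assumes "pw N tv \<gamma>" "i < N" "tv i < s" "s < tv (Suc i)"
  obtains g where "smooth_fun g" "\<forall>x\<in>{tv i..tv (Suc i)}. g x = \<gamma> x"
    "(\<gamma> has_vector_derivative dtr 1 g s) (at s)" "du \<gamma> s = dtr 1 g s"
proof -
  obtain g where g: "smooth_fun g" "\<forall>x\<in>{tv i..tv (Suc i)}. g x = \<gamma> x"
    using assms unfolding pw_def by blast
  have "(\<gamma> has_vector_derivative dtr 1 g s) (at s)"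
    apply (rule has_vector_derivative_transform_within_open[OF smooth_deriv(1)[OF g(1)], of "{tv i<..<tv (Suc i)}"])
    using assms g(2) by auto
  moreover then have "du \<gamma> s = dtr 1 g s" unfolding du_def by (rule vector_derivative_at)
  ultimately show ?thesis using g that by blast
qed

lemma pw_has_deriv:
  assumes "pw N tv \<gamma>" "i < N" "tv i < s" "s < tv (Suc i)"
  shows "(\<gamma> has_vector_derivative du \<gamma> s) (at s)"
  using pw_deriv[OF assms] by metis

lemma piece_integrable:
  fixes f :: "real \<Rightarrow> real"
  assumes "\<forall>i<N. tv i < tv (Suc i)"
    "\<forall>i<N. \<exists>h. continuous_on {tv i..tv (Suc i)} h \<and> (\<forall>s\<in>{tv i<..<tv (Suc i)}. f s = h s)"
  shows "f integrable_on {tv 0..tv N}"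
  using assms
proof (induction N)
  case 0 then show ?case using integrable_on_refl[of f "tv 0"] by simp
next
  case (Suc N)
  have IH: "f integrable_on {tv 0..tv N}" by (rule Suc.IH) (use Suc.prems in simp_all)
  obtain h where h: "continuous_on {tv N..tv (Suc N)} h" "\<forall>s\<in>{tv N<..<tv (Suc N)}. f s = h s"
    using Suc.prems(2) by blast
  have hi: "h integrable_on {tv N..tv (Suc N)}" using h(1) integrable_continuous_interval by blast
  have "f integrable_on {tv N..tv (Suc N)}"
  proof (rule integrable_spike_finite[where S="{tv N, tv (Suc N)}" and f=h, OF _ _ hi])
    fix x assume "x \<in> {tv N..tv (Suc N)} - {tv N, tv (Suc N)}"
    then have "x \<in> {tv N<..<tv (Suc N)}" by auto
    then show "f x = h x" using h(2) by blast
  qed simp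
  moreover have "tv 0 \<le> tv N" using tv_le[OF Suc.prems(1), of 0 N] by simp
  moreover have "tv N \<le> tv (Suc N)" using Suc.prems(1) by (simp add: less_imp_le)
  ultimately show ?case using IH Henstock_Kurzweil_Integration.integrable_combine[where a="tv 0" and c="tv N" and b="tv (Suc N)" and f=f] by blast
qed

lemma continuous_on_det2[continuous_intros]:
  "continuous_on S f \<Longrightarrow> continuous_on S g \<Longrightarrow> continuous_on S (\<lambda>x. det2 (f x) (g x))"
  unfolding det2_def by (intro continuous_intros)

lemma pw_integrable:
  assumes "\<forall>i<N. tv i < tv (Suc i)" "pw N tv \<alpha>" "pw N tv \<beta>"
  shows "(\<lambda>s. det2 (\<alpha> s) (du \<beta> s)) integrable_on {tv 0..tv N}"
proof (rule piece_integrable[OF assms(1)], intro allI impI)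
  fix i assume i: "i < N"
  obtain g where g: "smooth_fun g" "\<forall>s\<in>{tv i..tv (Suc i)}. g s = \<beta> s"
    using assms(3) i unfolding pw_def by blast
  have "continuous_on {tv i..tv (Suc i)} (\<lambda>s. det2 (\<alpha> s) (dtr 1 g s))"
    using assms(2) smooth_deriv(2)[OF g(1)] unfolding pw_def
    by (intro continuous_intros) (auto intro: continuous_on_subset[OF _ subset_UNIV])
  moreover have "\<forall>s\<in>{tv i<..<tv (Suc i)}. det2 (\<alpha> s) (du \<beta> s) = det2 (\<alpha> s) (dtr 1 g s)"
  proof
    fix s assume s: "s \<in> {tv i<..<tv (Suc i)}"
    obtain g' where g': "smooth_fun g'" "\<forall>x\<in>{tv i..tv (Suc i)}. g' x = \<beta> x"
      "(\<beta> has_vector_derivative dtr 1 g' s) (at s)" "du \<beta> s = dtr 1 g' s"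
      using pw_deriv[OF assms(3) i] s by auto
    have "(\<beta> has_vector_derivative dtr 1 g s) (at s)"
      apply (rule has_vector_derivative_transform_within_open[OF smooth_deriv(1)[OF g(1)], of "{tv i<..<tv (Suc i)}"])
      using s g(2) by auto
    then have "du \<beta> s = dtr 1 g s" unfolding du_def by (rule vector_derivative_at)
    then show "det2 (\<alpha> s) (du \<beta> s) = det2 (\<alpha> s) (dtr 1 g s)" by simp
  qed
  ultimately show "\<exists>h. continuous_on {tv i..tv (Suc i)} h \<and>
      (\<forall>s\<in>{tv i<..<tv (Suc i)}. det2 (\<alpha> s) (du \<beta> s) = h s)" by blast
qed

lemma det2_deriv:
  assumes "(\<alpha> has_vector_derivative a) (at s)" "(\<beta> has_vector_derivative b) (at s)"
  shows "((\<lambda>x. det2 (\<alpha> x) (\<beta> x)) has_vector_derivative (det2 a (\<beta> s) + det2 (\<alpha> s) b)) (at s)"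
proof -
  have f1: "((\<lambda>x. fst (\<alpha> x)) has_vector_derivative fst a) (at s)"
    using bounded_linear.has_vector_derivative[OF bounded_linear_fst assms(1)] by simp
  have s1: "((\<lambda>x. snd (\<alpha> x)) has_vector_derivative snd a) (at s)"
    using bounded_linear.has_vector_derivative[OF bounded_linear_snd assms(1)] by simp
  have f2: "((\<lambda>x. fst (\<beta> x)) has_vector_derivative fst b) (at s)"
    using bounded_linear.has_vector_derivative[OF bounded_linear_fst assms(2)] by simp
  have s2: "((\<lambda>x. snd (\<beta> x)) has_vector_derivative snd b) (at s)"
    using bounded_linear.has_vector_derivative[OF bounded_linear_snd assms(2)] by simp
  have "((\<lambda>x. fst (\<alpha> x) * snd (\<beta> x) - snd (\<alpha> x) * fst (\<beta> x)) has_vector_derivative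
     ((fst (\<alpha> s) * snd b + fst a * snd (\<beta> s)) - (snd (\<alpha> s) * fst b + snd a * fst (\<beta> s)))) (at s)"
    by (intro has_vector_derivative_diff has_vector_derivative_mult f1 f2 s1 s2)
  then show ?thesis unfolding det2_def
    by (rule has_vector_derivative_eq_rhs) (simp add: algebra_simps)
qed

lemma by_parts:
  assumes mono: "\<forall>i<N. tv i < tv (Suc i)" and pa: "pw N tv \<alpha>" and pb: "pw N tv \<beta>"
    and per: "det2 (\<alpha> (tv N)) (\<beta> (tv N)) = det2 (\<alpha> (tv 0)) (\<beta> (tv 0))"
  shows "integral {tv 0..tv N} (\<lambda>s. det2 (\<alpha> s) (du \<beta> s)) =
         integral {tv 0..tv N} (\<lambda>s. det2 (\<beta> s) (du \<alpha> s))"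
proof -
  have "((\<lambda>s. det2 (du \<alpha> s) (\<beta> s) + det2 (\<alpha> s) (du \<beta> s)) has_integral
        (det2 (\<alpha> (tv N)) (\<beta> (tv N)) - det2 (\<alpha> (tv 0)) (\<beta> (tv 0)))) {tv 0..tv N}"
  proof (rule fundamental_theorem_of_calculus_interior_strong[of "tv ` {..N}"])
    show "tv 0 \<le> tv N" using tv_le[OF mono, of 0 N] by simp
    show "continuous_on {tv 0..tv N} (\<lambda>x. det2 (\<alpha> x) (\<beta> x))"
      using pa pb unfolding pw_def by (intro continuous_intros) (auto intro: continuous_on_subset[OF _ subset_UNIV])
    fix x assume x: "x \<in> {tv 0<..<tv N} - tv ` {..N}"
    then obtain i where i: "i < N" "tv i < x" "x < tv (Suc i)"
      using piece_of[OF mono, of x] by auto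
    show "((\<lambda>x. det2 (\<alpha> x) (\<beta> x)) has_vector_derivative
           det2 (du \<alpha> x) (\<beta> x) + det2 (\<alpha> x) (du \<beta> x)) (at x)"
      by (rule det2_deriv; rule pw_has_deriv[OF _ i]; fact)
  qed simp
  then have "integral {tv 0..tv N} (\<lambda>s. det2 (du \<alpha> s) (\<beta> s) + det2 (\<alpha> s) (du \<beta> s)) = 0"
    using per by (simp add: integral_unique)
  moreover have "integral {tv 0..tv N} (\<lambda>s. det2 (du \<alpha> s) (\<beta> s) + det2 (\<alpha> s) (du \<beta> s))
     = - integral {tv 0..tv N} (\<lambda>s. det2 (\<beta> s) (du \<alpha> s)) + integral {tv 0..tv N} (\<lambda>s. det2 (\<alpha> s) (du \<beta> s))"
  proof -
    have "(\<lambda>s. det2 (du \<alpha> s) (\<beta> s) + det2 (\<alpha> s) (du \<beta> s)) =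
          (\<lambda>s. - det2 (\<beta> s) (du \<alpha> s) + det2 (\<alpha> s) (du \<beta> s))"
      by (auto simp: det2_def)
    then show ?thesis
      by (simp add: integral_diff pw_integrable[OF mono pa pb] pw_integrable[OF mono pb pa])
  qed
  ultimately show ?thesis by simp
qed



lemma parallel_of_det0:
  assumes "det2 p D = 0" "p \<noteq> 0"
  obtains l where "D = l *\<^sub>R p"
proof (cases "fst p = 0")
  case True
  then have "snd p \<noteq> 0" using assms(2) by (simp add: prod_eq_iff)
  then have "D = (snd D / snd p) *\<^sub>R p" using assms(1) True unfolding det2_def
    by (auto simp: prod_eq_iff)
  then show ?thesis using that by blast
next
  case False
  then have "D = (fst D / fst p) *\<^sub>R p" using assms(1) unfolding det2_def
    by (auto simp: prod_eq_iff field_simps)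
  then show ?thesis using that by blast
qed

lemma zero_interior:
  fixes U :: "(real \<times> real) set"
  assumes "convex U" "\<forall>x\<in>U. - x \<in> U" "interior U \<noteq> {}"
  shows "0 \<in> interior U"
proof -
  obtain x where x: "x \<in> interior U" using assms(3) by auto
  show ?thesis
  proof (cases "x = 0")
    case True then show ?thesis using x by simp
  next
    case False
    have "- x \<in> U" using x assms(2) interior_subset by blast
    then have mx: "- x \<in> closure U" using closure_subset by blast
    have "x \<noteq> - x" using False by (auto simp: prod_eq_iff)
    then have "midpoint x (- x) \<in> open_segment x (- x)" by (simp add: midpoint_in_open_segment)
    moreover have "midpoint x (- x) = 0" by (simp add: midpoint_def)
    ultimately have "0 \<in> open_segment x (- x)" by simp
    then show ?thesis using in_interior_closure_convex_segment[OF assms(1) x mx] by blast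
  qed
qed

lemma det_nonzero:
  fixes U :: "(real \<times> real) set"
  assumes conv: "convex U" "0 \<in> interior U"
    and D: "(u has_vector_derivative D) (at s)" "D \<noteq> 0"
    and fr: "\<forall>h. \<bar>h\<bar> < d \<longrightarrow> u (s+h) \<in> frontier U" "d > 0"
  shows "det2 (u s) D \<noteq> 0"
proof
  assume det0: "det2 (u s) D = 0"
  define p where "p = u s"
  have pf: "p \<in> frontier U" using fr unfolding p_def by (metis abs_zero add.right_neutral)
  then have pni: "p \<notin> interior U" by (simp add: frontier_def)
  then have p0: "p \<noteq> 0" using conv(2) by auto
  obtain l where l: "D = l *\<^sub>R p" using parallel_of_det0[OF det0[folded p_def] p0] by blast
  have l0: "l \<noteq> 0" using l D(2) by auto
  obtain eps where eps: "eps > 0" "ball 0 eps \<subseteq> U" using conv(2) mem_interior by blast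
  have ballint: "ball 0 eps \<subseteq> interior U" using eps(2) by (simp add: interior_maximal)
  define e where "e = \<bar>l\<bar> * eps / 2"
  have e: "e > 0" using l0 eps by (simp add: e_def)
  have "(u has_derivative (\<lambda>h. h *\<^sub>R D)) (at s)" using D(1) by (simp add: has_vector_derivative_def)
  then obtain del where del: "del > 0"
    "\<forall>y. norm (y - s) < del \<longrightarrow> norm (u y - u s - (y - s) *\<^sub>R D) \<le> e * norm (y - s)"
    using e unfolding has_derivative_at_alt by blast
  define m where "m = min del d / 2"
  have m: "m > 0" "m < del" "m < d" using del fr(2) by (auto simp: m_def)
  define h where "h = sgn l * m"
  have habs: "\<bar>h\<bar> = m" using l0 m by (simp add: h_def abs_mult abs_sgn_eq)
  define t where "t = l * h"
  have t: "t = \<bar>l\<bar> * m" using l0 by (simp add: t_def h_def sgn_if)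
  have tpos: "t > 0" using t l0 m by simp
  define q where "q = u (s + h)"
  have qc: "q \<in> closure U" using fr habs m unfolding q_def frontier_def by auto
  define ev where "ev = q - p - h *\<^sub>R D"
  have evn: "norm ev \<le> e * m"
    using del(2)[rule_format, of "s + h"] habs m unfolding ev_def q_def p_def by auto
  define w where "w = - (1 / t) *\<^sub>R ev"
  have "norm w = norm ev / t" using tpos by (simp add: w_def)
  also have "\<dots> \<le> e * m / t" using evn tpos by (simp add: divide_right_mono)
  also have "\<dots> = eps / 2" using t l0 m by (simp add: e_def)
  finally have "norm w < eps" using eps by simp
  then have wi: "w \<in> interior U" using ballint by auto
  define e' where "e' = t / (1 + t)"
  have e': "0 < e'" "e' \<le> 1" using tpos by (auto simp: e'_def)
  have "q - e' *\<^sub>R (q - w) \<in> interior U"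
    by (rule mem_interior_closure_convex_shrink[OF conv(1) wi qc e'])
  moreover have "q - e' *\<^sub>R (q - w) = p"
  proof -
    have ev': "ev = q - (1 + t) *\<^sub>R p" unfolding ev_def l t_def by (simp add: algebra_simps)
    have t1: "1 + t \<noteq> 0" "t + t * t \<noteq> 0" using tpos by (simp, smt (verit) mult_pos_pos)
    have "fst q - t / (1 + t) * (fst q + 1 / t * (fst q - (1 + t) * fst p)) = fst p"
      using tpos t1 by (simp add: field_simps)
    moreover have "snd q - t / (1 + t) * (snd q + 1 / t * (snd q - (1 + t) * snd p)) = snd p"
      using tpos t1 by (simp add: field_simps)
    ultimately show ?thesis unfolding w_def ev' e'_def
      by (simp add: prod_eq_iff)
  qed
  ultimately show False using pni by simp
qed



lemma integral_spike_fin: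
  assumes "finite S" "\<And>x. x \<in> A - S \<Longrightarrow> f x = g x"
  shows "integral A f = integral A g"
  using integral_spike[OF negligible_finite[OF assms(1)], of A g f] assms(2) by metis

lemma shift_deriv:
  assumes "\<forall>x. \<gamma> (x + T) = - \<gamma> x" "(\<gamma> has_vector_derivative D) (at s)"
  shows "(\<gamma> has_vector_derivative - D) (at (s + T))"
proof -
  have e: "\<gamma> = (\<lambda>x. - \<gamma> x) \<circ> (\<lambda>x. x - T)"
  proof
    fix x show "\<gamma> x = ((\<lambda>x. - \<gamma> x) \<circ> (\<lambda>x. x - T)) x"
      using assms(1)[rule_format, of "x - T"] by simp
  qed
  have d1: "((\<lambda>x. x - T) has_vector_derivative 1) (at (s + T))"
  proof -
    have "((\<lambda>x. x - T) has_real_derivative 1) (at (s + T))"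
      by (auto intro!: derivative_eq_intros)
    then show ?thesis by (simp add: has_real_derivative_iff_has_vector_derivative)
  qed
  have d2: "((\<lambda>x. - \<gamma> x) has_vector_derivative - D) (at ((\<lambda>x. x - T) (s + T)))"
    using assms(2) by (simp add: has_vector_derivative_minus)
  show ?thesis using vector_diff_chain_at[OF d1 d2] e by simp
qed

lemma split_shift:
  fixes f :: "real \<Rightarrow> real"
  assumes "f integrable_on {0..2*T}" "T \<ge> 0"
  shows "integral {0..2*T} f = integral {0..T} (\<lambda>s. f s + f (s + T))"
proof -
  have i1: "f integrable_on {0..T}" using integrable_subinterval_real[OF assms(1), of 0 T] assms(2) by simp
  have i2: "f integrable_on {T..2*T}" using integrable_subinterval_real[OF assms(1), of T "2*T"] assms(2) by simp
  have "(f has_integral integral {T..2*T} f) {T..2*T}" using i2 by (rule integrable_integral)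
  from has_integral_shift_real_ivl[OF this, of T]
  have h2: "((\<lambda>s. f (s + T)) has_integral integral {T..2*T} f) {0..T}" by simp
  have "integral {0..2*T} f = integral {0..T} f + integral {T..2*T} f"
    using Henstock_Kurzweil_Integration.integral_combine[of 0 T "2*T" f] assms by simp
  also have "\<dots> = integral {0..T} (\<lambda>s. f s + f (s + T))"
  proof -
    have "integral {0..T} (\<lambda>s. f s + f (s + T)) = integral {0..T} f + integral {0..T} (\<lambda>s. f (s + T))"
      by (rule integral_add[OF i1 has_integral_integrable[OF h2]])
    moreover have "integral {0..T} (\<lambda>s. f (s + T)) = integral {T..2*T} f" using h2 by (rule integral_unique)
    ultimately show ?thesis by simp
  qed
  finally show ?thesis .
qed



lemma setting_facts:
  assumes "unit_ball_setting T n tv u U"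
  shows "T > 0" "\<forall>i<2*n. tv i < tv (Suc i)" "tv 0 = 0" "tv (2*n) = 2*T" "tv n = T"
    "pw (2*n) tv u" "\<forall>s. u (s + T) = - u s" "\<forall>s. u (s + 2*T) = u s"
proof -
  note A = assms[unfolded unit_ball_setting_def]
  show "T > 0" "\<forall>i<2*n. tv i < tv (Suc i)" "tv 0 = 0" "tv (2*n) = 2*T"
       "\<forall>s. u (s + T) = - u s" "\<forall>s. u (s + 2*T) = u s" using A by blast+
  have "\<forall>i\<le>n. tv (i+n) = tv i + T" using A by blast
  then show "tv n = T" using A by (metis add_0 le0)
  show "pw (2*n) tv u" unfolding pw_def using A by metis
qed

lemma setting_good:
  assumes "unit_ball_setting T n tv u U" "i < 2*n" "tv i < s" "s < tv (Suc i)"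
  shows "(u has_vector_derivative du u s) (at s)" "det2 (u s) (du u s) \<noteq> 0"
proof -
  note A = assms(1)[unfolded unit_ball_setting_def]
  note F = setting_facts[OF assms(1)]
  have "\<forall>i<2*n. \<exists>f. smooth_fun f \<and>
        (\<forall>s\<in>{tv i..tv (Suc i)}. f s = u s \<and> dtr 1 f s \<noteq> 0) \<and>
        ((\<forall>s\<in>{tv i..tv (Suc i)}. det2 (dtr 1 f s) (dtr 2 f s) \<noteq> 0) \<or>
         (\<exists>a b. u ` {tv i..tv (Suc i)} = closed_segment a b))" using A by (elim conjE) assumption
  then obtain f where f: "smooth_fun f" "\<forall>x\<in>{tv i..tv (Suc i)}. f x = u x \<and> dtr 1 f x \<noteq> 0"
    using assms(2) by meson
  have sI: "s \<in> {tv i..tv (Suc i)}" using assms(3,4) by simp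
  have fs: "dtr 1 f s \<noteq> 0" using bspec[OF f(2) sI] by blast
  have eqo: "\<And>y. y \<in> {tv i<..<tv (Suc i)} \<Longrightarrow> f y = u y"
  proof -
    fix y assume "y \<in> {tv i<..<tv (Suc i)}"
    then have "y \<in> {tv i..tv (Suc i)}" by simp
    then show "f y = u y" using f(2) by blast
  qed
  have hd: "(u has_vector_derivative dtr 1 f s) (at s)"
    by (rule has_vector_derivative_transform_within_open[OF smooth_deriv(1)[OF f(1)] open_greaterThanLessThan _ eqo])
       (use assms(3,4) in simp)
  then have dus: "du u s = dtr 1 f s" unfolding du_def by (rule vector_derivative_at)
  with hd show "(u has_vector_derivative du u s) (at s)" by simp
  have D0: "du u s \<noteq> 0" using fs dus by simp
  have cU: "convex U" using A by (elim conjE) assumption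
  have sU: "\<forall>x\<in>U. - x \<in> U" using A by (elim conjE) assumption
  have iU: "interior U \<noteq> {}" using A by (elim conjE) assumption
  have z: "0 \<in> interior U" using zero_interior[OF cU sU iU] .
  have t0: "0 \<le> tv i" using tv_le[OF F(2), of 0 i] assms(2) F(3) by simp
  have t1: "tv (Suc i) \<le> 2*T" using tv_le[OF F(2), of "Suc i" "2*n"] assms(2) F(4) by simp
  define d where "d = min s (2*T - s)"
  have dpos: "d > 0" using t0 t1 assms(3,4) by (simp add: d_def)
  have fr: "\<forall>h. \<bar>h\<bar> < d \<longrightarrow> u (s+h) \<in> frontier U"
  proof (intro allI impI)
    fix h :: real assume "\<bar>h\<bar> < d"
    then have "s + h \<in> {0..2*T}" unfolding d_def by auto
    moreover have "frontier U = u ` {0..2*T}" using A by (elim conjE) assumption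
    ultimately show "u (s+h) \<in> frontier U" by blast
  qed
  show "det2 (u s) (du u s) \<noteq> 0"
    using det_nonzero[of U u "du u s" s d, OF cU z] hd dus D0 fr dpos by simp
qed

lemma adm_pw:
  assumes "admissible T n tv u \<gamma> r"
  shows "pw (2*n) tv \<gamma>" "\<forall>s. \<gamma> (s + 2*T) = \<gamma> s"
    "\<And>i s. i < 2*n \<Longrightarrow> tv i < s \<Longrightarrow> s < tv (Suc i) \<Longrightarrow> du \<gamma> s = r s *\<^sub>R du u s"
  using assms unfolding admissible_def pw_def by auto



lemma det2_scale: "det2 x (c *\<^sub>R y) = c * det2 x y" "det2 (c *\<^sub>R x) y = c * det2 x y"
  unfolding det2_def by (simp_all add: algebra_simps)

lemma det2_neg: "det2 (- x) (- y) = det2 x y"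
  unfolding det2_def by simp

lemma IHW:
  assumes "det2 p a \<noteq> 0"
  shows "det2 g (r *\<^sub>R a) = det2 p (r *\<^sub>R a) * det2 g ((1 / det2 p a) *\<^sub>R a)"
  using assms by (simp add: det2_scale)

lemma good_of:
  assumes S: "unit_ball_setting T n tv u U" and s: "s \<in> {0..2*T} - tv ` {..2*n}"
  shows "\<exists>i<2*n. tv i < s \<and> s < tv (Suc i)"
proof -
  note F = setting_facts[OF S]
  show ?thesis using piece_of[OF F(2), of s] s F(3,4) by simp
qed

lemma adm_int:
  assumes S: "unit_ball_setting T n tv u U" and adm: "admissible T n tv u \<gamma> r"
    and dl: "dual_length T u r = 0"
  shows "integral {0..2*T} (\<lambda>s. det2 (u s) (du \<gamma> s)) = 0"
        "integral {0..2*T} (\<lambda>s. det2 (\<gamma> s) (du u s)) = 0"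
proof -
  note F = setting_facts[OF S]
  note P = adm_pw[OF adm]
  have "integral {0..2*T} (\<lambda>s. det2 (u s) (du \<gamma> s)) =
        integral {0..2*T} (\<lambda>s. r s * det2 (u s) (du u s))"
  proof (rule integral_spike_fin[of "tv ` {..2*n}"])
    fix s assume s: "s \<in> {0..2*T} - tv ` {..2*n}"
    then obtain i where i: "i < 2*n" "tv i < s" "s < tv (Suc i)" using good_of[OF S] by blast
    show "det2 (u s) (du \<gamma> s) = r s * det2 (u s) (du u s)"
      using P(3)[OF i] by (simp add: det2_def algebra_simps)
  qed simp
  then show a: "integral {0..2*T} (\<lambda>s. det2 (u s) (du \<gamma> s)) = 0"
    using dl unfolding dual_length_def by simp
  have "integral {tv 0..tv (2*n)} (\<lambda>s. det2 (\<gamma> s) (du u s)) =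
        integral {tv 0..tv (2*n)} (\<lambda>s. det2 (u s) (du \<gamma> s))"
  proof -
    have g2: "\<gamma> (2*T) = \<gamma> 0" using spec[OF P(2), of 0] by simp
    have u2: "u (2*T) = u 0" using spec[OF F(8), of 0] by simp
    have per: "det2 (\<gamma> (tv (2*n))) (u (tv (2*n))) = det2 (\<gamma> (tv 0)) (u (tv 0))"
      using g2 u2 F(3,4) by simp
    show ?thesis by (rule by_parts[OF F(2) P(1) F(6) per])
  qed
  then show "integral {0..2*T} (\<lambda>s. det2 (\<gamma> s) (du u s)) = 0" using a F(3,4) by simp
qed



lemma main1:
  assumes S: "unit_ball_setting T n tv u U"
    and a1: "admissible T n tv u \<gamma>1 r1" and sym: "\<forall>s. \<gamma>1 (s + T) = - \<gamma>1 s"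
    and dl1: "dual_length T u r1 = 0"
    and a2: "admissible T n tv u \<gamma>2 r2"
    and cw: "\<forall>i<2*n. \<forall>s\<in>{tv i<..<tv (Suc i)}.
            det2 (\<gamma>2 (s + T)) (vfield u (s + T)) + det2 (\<gamma>2 s) (vfield u s) = c"
  shows "mixed_area T \<gamma>1 \<gamma>2 = 0"
proof -
  note F = setting_facts[OF S]
  note P1 = adm_pw[OF a1]
  note P2 = adm_pw[OF a2]
  define I where "I = (\<lambda>s. det2 (\<gamma>2 s) (du \<gamma>1 s))"
  define H where "H = (\<lambda>s. det2 (u s) (du \<gamma>1 s))"
  define W where "W = (\<lambda>s. det2 (\<gamma>2 s) (vfield u s))"
  have bp: "integral {0..2*T} (\<lambda>s. det2 (\<gamma>1 s) (du \<gamma>2 s)) = integral {0..2*T} I"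
  proof -
    have g1: "\<gamma>1 (2*T) = \<gamma>1 0" using spec[OF P1(2), of 0] by simp
    have g2: "\<gamma>2 (2*T) = \<gamma>2 0" using spec[OF P2(2), of 0] by simp
    have per: "det2 (\<gamma>1 (tv (2*n))) (\<gamma>2 (tv (2*n))) = det2 (\<gamma>1 (tv 0)) (\<gamma>2 (tv 0))"
      using g1 g2 F(3,4) by simp
    show ?thesis using by_parts[OF F(2) P1(1) P2(1) per] F(3,4) unfolding I_def by simp
  qed
  have Iint: "I integrable_on {0..2*T}"
    using pw_integrable[OF F(2) P2(1) P1(1)] F(3,4) unfolding I_def by simp
  have Hint: "H integrable_on {0..2*T}"
    using pw_integrable[OF F(2) F(6) P1(1)] F(3,4) unfolding H_def by simp
  have T0: "T \<ge> 0" using F(1) by simp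
  have key: "I s + I (s + T) = c * H s \<and> H s + H (s + T) = 2 * H s"
    if s: "s \<in> {0..T} - tv ` {..2*n}" for s
  proof -
    have "T \<le> 2*T" using T0 by simp
    then have s2: "s \<in> {0..2*T} - tv ` {..2*n}" using s by auto
    obtain i where i: "i < 2*n" "tv i < s" "s < tv (Suc i)" using good_of[OF S s2] by blast
    have "s \<noteq> T" using s F(5) by force
    then have sT: "s < T" using s by simp
    have inn: "i < n"
    proof (rule ccontr)
      assume "\<not> i < n"
      then have "tv n \<le> tv i" using tv_le[OF F(2), of n i] i(1) by simp
      then show False using sT i(2) F(5) by simp
    qed
    have A: "\<forall>i\<le>n. tv (i+n) = tv i + T" using S unfolding unit_ball_setting_def by (elim conjE) assumption
    have j: "i + n < 2*n" "tv (i+n) < s + T" "s + T < tv (Suc (i + n))"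
      using inn i A[rule_format, of i] A[rule_format, of "Suc i"] by auto
    have du1: "(\<gamma>1 has_vector_derivative du \<gamma>1 s) (at s)" by (rule pw_has_deriv[OF P1(1) i])
    have duu: "(u has_vector_derivative du u s) (at s)" using setting_good[OF S i] by blast
    have k0: "det2 (u s) (du u s) \<noteq> 0" using setting_good[OF S i] by blast
    have k0': "det2 (u (s+T)) (du u (s+T)) \<noteq> 0" using setting_good[OF S j] by blast
    have sh1: "du \<gamma>1 (s+T) = - du \<gamma>1 s"
      unfolding du_def by (rule vector_derivative_at[OF shift_deriv[OF sym du1[unfolded du_def]]])
    have shu: "du u (s+T) = - du u s"
      unfolding du_def by (rule vector_derivative_at[OF shift_deriv[OF F(7) duu[unfolded du_def]]])
    have Hs: "H (s + T) = H s" unfolding H_def using sh1 F(7) by (simp add: det2_neg)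
    have Is: "I s = H s * W s"
      unfolding I_def H_def W_def vfield_def P1(3)[OF i] by (rule IHW[OF k0])
    have Is': "I (s+T) = H (s+T) * W (s+T)"
      unfolding I_def H_def W_def vfield_def P1(3)[OF j] by (rule IHW[OF k0'])
    have cws: "W (s + T) + W s = c" using cw i unfolding W_def by auto
    have "I s + I (s + T) = H s * (W s + W (s + T))" using Is Is' Hs by (simp add: algebra_simps)
    also have "\<dots> = c * H s" using cws by (simp add: algebra_simps)
    finally show ?thesis using Hs by simp
  qed
  have "integral {0..2*T} I = integral {0..T} (\<lambda>s. I s + I (s + T))"
    by (rule split_shift[OF Iint T0])
  also have "\<dots> = integral {0..T} (\<lambda>s. c * H s)"
    by (rule integral_spike_fin[of "tv ` {..2*n}"]) (use key in auto)
  also have "\<dots> = c * integral {0..T} H" by simp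
  finally have e1: "integral {0..2*T} I = c * integral {0..T} H" .
  have "integral {0..2*T} H = integral {0..T} (\<lambda>s. H s + H (s + T))"
    by (rule split_shift[OF Hint T0])
  also have "\<dots> = integral {0..T} (\<lambda>s. 2 * H s)"
    by (rule integral_spike_fin[of "tv ` {..2*n}"]) (use key in auto)
  also have "\<dots> = 2 * integral {0..T} H" by simp
  finally have "2 * integral {0..T} H = 0"
    using adm_int(1)[OF S a1 dl1] unfolding H_def by simp
  then have "integral {0..T} H = 0" by simp
  then show ?thesis unfolding mixed_area_def using bp e1 by simp
qed



lemma main2:
  assumes S: "unit_ball_setting T n tv u U"
    and a: "admissible T n tv u \<gamma> r" and dl: "dual_length T u r = 0"
  shows "mixed_area T \<gamma> (\<lambda>s. scaleR c (u s)) = 0 \<and> mixed_area T (\<lambda>s. scaleR c (u s)) \<gamma> = 0"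
proof
  note F = setting_facts[OF S]
  have "integral {0..2*T} (\<lambda>s. det2 (\<gamma> s) (du (\<lambda>s. c *\<^sub>R u s) s)) =
        integral {0..2*T} (\<lambda>s. c * det2 (\<gamma> s) (du u s))"
  proof (rule integral_spike_fin[of "tv ` {..2*n}"])
    fix s assume s: "s \<in> {0..2*T} - tv ` {..2*n}"
    then obtain i where i: "i < 2*n" "tv i < s" "s < tv (Suc i)" using good_of[OF S] by blast
    have "(u has_vector_derivative du u s) (at s)" using setting_good[OF S i] by blast
    from bounded_linear.has_vector_derivative[OF bounded_linear_scaleR_right this, of c]
    have "du (\<lambda>s. c *\<^sub>R u s) s = c *\<^sub>R du u s" unfolding du_def by (rule vector_derivative_at)
    then show "det2 (\<gamma> s) (du (\<lambda>s. c *\<^sub>R u s) s) = c * det2 (\<gamma> s) (du u s)"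
      by (simp add: det2_scale)
  qed simp
  also have "\<dots> = c * integral {0..2*T} (\<lambda>s. det2 (\<gamma> s) (du u s))" by simp
  also have "\<dots> = 0" using adm_int(2)[OF S a dl] by simp
  finally show "mixed_area T \<gamma> (\<lambda>s. scaleR c (u s)) = 0" unfolding mixed_area_def by simp
  have "integral {0..2*T} (\<lambda>s. det2 (c *\<^sub>R u s) (du \<gamma> s)) =
        integral {0..2*T} (\<lambda>s. c * det2 (u s) (du \<gamma> s))" by (simp add: det2_scale)
  also have "\<dots> = c * integral {0..2*T} (\<lambda>s. det2 (u s) (du \<gamma> s))" by simp
  also have "\<dots> = 0" using adm_int(1)[OF S a dl] by simp
  finally show "mixed_area T (\<lambda>s. scaleR c (u s)) \<gamma> = 0" unfolding mixed_area_def by simp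
qed

theorem mainTheorem7:
  assumes "unit_ball_setting T n tv u U"
  shows "(\<forall>\<gamma>1 \<in> C0sym T n tv u. \<forall>\<gamma>2 \<in> C0cw T n tv u. mixed_area T \<gamma>1 \<gamma>2 = 0) \<and>
         (\<forall>\<gamma> \<in> C0sym T n tv u \<union> C0cw T n tv u. \<forall>c::real.
            mixed_area T \<gamma> (\<lambda>s. scaleR c (u s)) = 0 \<and> mixed_area T (\<lambda>s. scaleR c (u s)) \<gamma> = 0)"
proof (intro conjI ballI allI)
  fix \<gamma>1 \<gamma>2 assume g1: "\<gamma>1 \<in> C0sym T n tv u" and g2: "\<gamma>2 \<in> C0cw T n tv u"
  obtain r1 where r1: "admissible T n tv u \<gamma>1 r1" "\<forall>s. \<gamma>1 (s + T) = - \<gamma>1 s" "dual_length T u r1 = 0"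
    using g1 unfolding C0sym_def by blast
  obtain r2 c where r2: "admissible T n tv u \<gamma>2 r2"
    "\<forall>i<2*n. \<forall>s\<in>{tv i<..<tv (Suc i)}.
            det2 (\<gamma>2 (s + T)) (vfield u (s + T)) + det2 (\<gamma>2 s) (vfield u s) = c"
    using g2 unfolding C0cw_def by blast
  show "mixed_area T \<gamma>1 \<gamma>2 = 0" by (rule main1[OF assms r1 r2])
next
  fix \<gamma> c assume "\<gamma> \<in> C0sym T n tv u \<union> C0cw T n tv u"
  then obtain r where r: "admissible T n tv u \<gamma> r" "dual_length T u r = 0"
    unfolding C0sym_def C0cw_def by blast
  show "mixed_area T \<gamma> (\<lambda>s. scaleR c (u s)) = 0" using main2[OF assms r] by blast
  show "mixed_area T (\<lambda>s. scaleR c (u s)) \<gamma> = 0" using main2[OF assms r] by blast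
qed

end
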